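(* Let $(X,\tau_1,\tau_2)$ be a bitopological space, $i,j\in\{1,2\}$, $i\neq j$, which is $(i,j)_1$-nearly paralindelöf, $(i,j)$-regular and a $j$-$P$-space. If $X$ is $(i,j)$-weakly Lindelöf, then $(X,\tau_i)$ is Lindelöf.
   Context: $(X,\tau_1,\tau_2)$ is a bitopological space and $i,j\in\{1,2\}$, $i\neq j$. For $k\in\{1,2\}$, $k\text{-}\mathrm{int}$ and $k\text{-}\mathrm{cl}$ denote interior and closure with respect to $\tau_k$; "$k$-open" means $\tau_k$-open. A set $A$ is $(i,j)$-regular open if $A=i\text{-}\mathrm{int}(j\text{-}\mathrm{cl}(A))$. $X$ is $(i,j)$-regular if for each $x\in X$ and each $i$-open set $U$ containing $x$ there is an $i$-open set $V$ with $x\in V\subseteq j\text{-}\mathrm{cl}(V)\subseteq U$. A family $\mathcal V$ refines $\mathcal U$ if each member of $\mathcal V$ is contained in some member of $\mathcal U$; a family is a cover of $X$ if its union is $X$. A family is $k$-locally countable if every $x\in X$ has a $k$-open neighbourhood meeting at most countably many of its members. $X$ is a $k$-$P$-space if every intersection of countably many $k$-open sets is $k$-open. $X$ is $(i,j)_1$-nearly paralindelöf if every cover of $X$ by $(i,j)$-regular open sets has a refinement which is a cover of $X$ by $i$-open sets and which is $j$-locally countable. $X$ is $(i,j)$-weakly Lindelöf if every cover $\{U_\alpha:\alpha\in\Delta\}$ of $X$ by $i$-open sets has a countable subfamily $\{U_{\alpha_n}:n\in\mathbb N\}$ with $X=j\text{-}\mathrm{cl}(\bigcup_n U_{\alpha_n})$.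 *)

theory Defs
  imports "HOL-Analysis.Analysis"
begin

definition bitop :: "'a topology \<Rightarrow> 'a topology \<Rightarrow> nat \<Rightarrow> 'a topology" where
  "bitop \<tau>1 \<tau>2 k = (if k = 1 then \<tau>1 else \<tau>2)"

definition ij_regular_open :: "'a topology \<Rightarrow> 'a topology \<Rightarrow> 'a set \<Rightarrow> bool" where
  "ij_regular_open Ti Tj A \<longleftrightarrow> A = Ti interior_of (Tj closure_of A)"

definition ij_regular :: "'a topology \<Rightarrow> 'a topology \<Rightarrow> bool" where
  "ij_regular Ti Tj \<longleftrightarrow>
     (\<forall>x U. openin Ti U \<and> x \<in> U \<longrightarrow>
        (\<exists>V. openin Ti V \<and> x \<in> V \<and> V \<subseteq> Tj closure_of V \<and> Tj closure_of V \<subseteq> U))"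

definition refines :: "'a set set \<Rightarrow> 'a set set \<Rightarrow> bool" where
  "refines \<V> \<U> \<longleftrightarrow> (\<forall>V\<in>\<V>. \<exists>U\<in>\<U>. V \<subseteq> U)"

definition locally_countable :: "'a topology \<Rightarrow> 'a set set \<Rightarrow> bool" where
  "locally_countable T \<V> \<longleftrightarrow>
     (\<forall>x\<in>topspace T. \<exists>W. openin T W \<and> x \<in> W \<and> countable {V\<in>\<V>. V \<inter> W \<noteq> {}})"

text \<open>P-space: intersections of countably many (at least one) open sets are open
  (the empty intersection is the whole space, which is trivially open).\<close>
definition P_space :: "'a topology \<Rightarrow> bool" where
  "P_space T \<longleftrightarrow>
     (\<forall>\<U>. countable \<U> \<and> \<U> \<noteq> {} \<and> (\<forall>U\<in>\<U>. openin T U) \<longrightarrow> openin T (\<Inter>\<U>))"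

definition ij1_nearly_paralindelof :: "'a topology \<Rightarrow> 'a topology \<Rightarrow> bool" where
  "ij1_nearly_paralindelof Ti Tj \<longleftrightarrow>
     (\<forall>\<U>. (\<forall>U\<in>\<U>. ij_regular_open Ti Tj U) \<and> \<Union>\<U> = topspace Ti \<longrightarrow>
        (\<exists>\<V>. refines \<V> \<U> \<and> (\<forall>V\<in>\<V>. openin Ti V) \<and> \<Union>\<V> = topspace Ti
             \<and> locally_countable Tj \<V>))"

definition ij_weakly_Lindelof :: "'a topology \<Rightarrow> 'a topology \<Rightarrow> bool" where
  "ij_weakly_Lindelof Ti Tj \<longleftrightarrow>
     (\<forall>\<U>. (\<forall>U\<in>\<U>. openin Ti U) \<and> \<Union>\<U> = topspace Ti \<longrightarrow>
        (\<exists>\<C>. \<C> \<subseteq> \<U> \<and> countable \<C> \<and> Tj closure_of (\<Union>\<C>) = topspace Ti))"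

end

theory Submission
  imports Defs
begin

lemma ro_lemma:
  "ij_regular_open Ti Tj (Ti interior_of (Tj closure_of A))"
proof -
  let ?B = "Ti interior_of (Tj closure_of A)"
  have "?B \<subseteq> Tj closure_of A" by (rule interior_of_subset)
  hence "Tj closure_of ?B \<subseteq> Tj closure_of (Tj closure_of A)"
    by (rule closure_of_mono)
  hence "Tj closure_of ?B \<subseteq> Tj closure_of A" by simp
  hence 1: "Ti interior_of (Tj closure_of ?B) \<subseteq> ?B" by (rule interior_of_mono)
  have 2: "?B \<subseteq> Ti interior_of (Tj closure_of ?B)"
  proof (rule interior_of_maximal)
    show "openin Ti ?B" by simp
    show "?B \<subseteq> Tj closure_of ?B"
    proof
      fix z assume z: "z \<in> ?B"
      hence "z \<in> Tj closure_of A" using interior_of_subset[of Ti "Tj closure_of A"] by blast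
      hence "z \<in> topspace Tj" using closure_of_subset_topspace[of Tj A] by blast
      thus "z \<in> Tj closure_of ?B" using z closure_of_subset_Int[of Tj ?B] by blast
    qed
  qed
  show ?thesis unfolding ij_regular_open_def using 1 2 by (rule subset_antisym[symmetric])
qed

lemma lc_closure:
  assumes lc: "locally_countable Tj \<V>" and P: "P_space Tj" and C: "C \<subseteq> \<V>"
    and x: "x \<in> Tj closure_of (\<Union>C)"
  shows "\<exists>V\<in>C. x \<in> Tj closure_of V"
proof (rule ccontr)
  assume nc: "\<not> (\<exists>V\<in>C. x \<in> Tj closure_of V)"
  have xt: "x \<in> topspace Tj" using x by (simp add: in_closure_of)
  obtain W where W: "openin Tj W" "x \<in> W" "countable {V\<in>\<V>. V \<inter> W \<noteq> {}}"
    using lc xt unfolding locally_countable_def by blast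
  define D where "D = {V\<in>\<V>. V \<inter> W \<noteq> {}} \<inter> C"
  have cD: "countable D" using W(3) unfolding D_def by simp
  have "\<forall>V\<in>D. \<exists>H. openin Tj H \<and> x \<in> H \<and> H \<inter> V = {}"
  proof
    fix V assume "V \<in> D"
    hence "V \<in> C" unfolding D_def by blast
    hence "x \<notin> Tj closure_of V" using nc by blast
    thus "\<exists>H. openin Tj H \<and> x \<in> H \<and> H \<inter> V = {}"
      using xt unfolding in_closure_of by blast
  qed
  then obtain H where H: "\<And>V. V \<in> D \<Longrightarrow> openin Tj (H V) \<and> x \<in> H V \<and> H V \<inter> V = {}"
    by (rule bchoice[elim_format]) blast
  define F where "F = insert W (H ` D)"
  have "countable F" unfolding F_def using cD by simp
  moreover have "F \<noteq> {}" unfolding F_def by simp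
  moreover have "\<forall>G\<in>F. openin Tj G" unfolding F_def using W(1) H by blast
  ultimately have "openin Tj (\<Inter>F)"
    using P unfolding P_space_def by blast
  moreover have "x \<in> \<Inter>F" unfolding F_def using W H by auto
  ultimately obtain y where y: "y \<in> \<Union>C" "y \<in> \<Inter>F"
    using x unfolding in_closure_of by blast
  then obtain V where V: "V \<in> C" "y \<in> V" by blast
  have "y \<in> W" using y unfolding F_def by auto
  hence "V \<in> D" unfolding D_def using V C by blast
  hence "y \<in> H V" using y unfolding F_def by auto
  thus False using H[OF \<open>V \<in> D\<close>] V by blast
qed

lemma key:
  assumes X: "topspace Ti = topspace Tj"
    and np: "ij1_nearly_paralindelof Ti Tj"
    and reg: "ij_regular Ti Tj"
    and P: "P_space Tj"
    and wL: "ij_weakly_Lindelof Ti Tj"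
  shows "Lindelof_space Ti"
  unfolding Lindelof_space_def
proof (intro allI impI)
  fix \<U> assume U: "(\<forall>U\<in>\<U>. openin Ti U) \<and> \<Union>\<U> = topspace Ti"
  have "\<forall>x\<in>topspace Ti. \<exists>p. fst p \<in> \<U> \<and> openin Ti (snd p) \<and> x \<in> snd p
          \<and> Tj closure_of (snd p) \<subseteq> fst p"
  proof
    fix x assume "x \<in> topspace Ti"
    then obtain U where "U \<in> \<U>" "x \<in> U" using U by blast
    then obtain V where "openin Ti V" "x \<in> V" "Tj closure_of V \<subseteq> U"
      using reg U unfolding ij_regular_def by meson
    thus "\<exists>p. fst p \<in> \<U> \<and> openin Ti (snd p) \<and> x \<in> snd p
          \<and> Tj closure_of (snd p) \<subseteq> fst p" using \<open>U \<in> \<U>\<close>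
      by (intro exI[of _ "(U,V)"]) auto
  qed
  then obtain p where p: "\<And>x. x \<in> topspace Ti \<Longrightarrow> fst (p x) \<in> \<U> \<and> openin Ti (snd (p x))
     \<and> x \<in> snd (p x) \<and> Tj closure_of (snd (p x)) \<subseteq> fst (p x)"
    by (rule bchoice[elim_format]) blast
  define u where "u x = fst (p x)" for x
  define v where "v x = snd (p x)" for x
  define w where "w x = Ti interior_of (Tj closure_of (v x))" for x
  have xw: "x \<in> w x" if "x \<in> topspace Ti" for x
  proof -
    have o: "openin Ti (v x)" "x \<in> v x" using p[OF that] unfolding v_def by auto
    have "v x \<subseteq> topspace Tj" using openin_subset[OF o(1)] X by simp
    hence "v x \<subseteq> Tj closure_of (v x)" by (rule closure_of_subset)
    hence "v x \<subseteq> w x" unfolding w_def using o(1) by (rule interior_of_maximal)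
    thus ?thesis using o by blast
  qed
  have "\<Union>(w ` topspace Ti) = topspace Ti"
  proof
    show "\<Union>(w ` topspace Ti) \<subseteq> topspace Ti"
      unfolding w_def using interior_of_subset_topspace[of Ti] by blast
    show "topspace Ti \<subseteq> \<Union>(w ` topspace Ti)" using xw by blast
  qed
  moreover have "\<forall>W\<in>w ` topspace Ti. ij_regular_open Ti Tj W"
    unfolding w_def by (auto intro: ro_lemma)
  ultimately obtain \<V> where V: "refines \<V> (w ` topspace Ti)" "\<forall>V\<in>\<V>. openin Ti V"
      "\<Union>\<V> = topspace Ti" "locally_countable Tj \<V>"
    using np unfolding ij1_nearly_paralindelof_def by meson
  obtain C where C: "C \<subseteq> \<V>" "countable C" "Tj closure_of (\<Union>C) = topspace Ti"
    using wL V unfolding ij_weakly_Lindelof_def by meson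
  have "\<forall>V\<in>C. \<exists>y. y \<in> topspace Ti \<and> V \<subseteq> w y" using V(1) C(1) unfolding refines_def by blast
  then obtain g where g: "\<And>V. V \<in> C \<Longrightarrow> g V \<in> topspace Ti \<and> V \<subseteq> w (g V)"
    by (rule bchoice[elim_format]) blast
  have clsub: "Tj closure_of V \<subseteq> u (g V)" if "V \<in> C" for V
  proof -
    have "Tj closure_of V \<subseteq> Tj closure_of (w (g V))" using g[OF that] by (intro closure_of_mono) blast
    also have "\<dots> \<subseteq> Tj closure_of (Tj closure_of (v (g V)))"
      unfolding w_def by (intro closure_of_mono interior_of_subset)
    also have "\<dots> \<subseteq> u (g V)" using p g[OF that] unfolding u_def v_def by simp
    finally show ?thesis .
  qed
  show "\<exists>\<W>. countable \<W> \<and> \<W> \<subseteq> \<U> \<and> \<Union>\<W> = topspace Ti"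
  proof (intro exI conjI)
    show "countable ((u \<circ> g) ` C)" using C(2) by simp
    show "(u \<circ> g) ` C \<subseteq> \<U>" using p g unfolding u_def by auto
    show "\<Union>((u \<circ> g) ` C) = topspace Ti"
    proof
      show "\<Union>((u \<circ> g) ` C) \<subseteq> topspace Ti" using U \<open>(u \<circ> g) ` C \<subseteq> \<U>\<close> by blast
      show "topspace Ti \<subseteq> \<Union>((u \<circ> g) ` C)"
      proof
        fix x assume "x \<in> topspace Ti"
        hence "x \<in> Tj closure_of (\<Union>C)" using C(3) by simp
        then obtain V where "V \<in> C" "x \<in> Tj closure_of V"
          using lc_closure[OF V(4) P C(1)] by blast
        thus "x \<in> \<Union>((u \<circ> g) ` C)" using clsub by fastforce
      qed
    qed
  qed
qed

theorem mainTheorem7: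
  fixes \<tau>1 \<tau>2 :: "'a topology" and i j :: nat
  assumes "topspace \<tau>1 = topspace \<tau>2"
    and "i \<in> {1,2}" and "j \<in> {1,2}" and "i \<noteq> j"
    and "ij1_nearly_paralindelof (bitop \<tau>1 \<tau>2 i) (bitop \<tau>1 \<tau>2 j)"
    and "ij_regular (bitop \<tau>1 \<tau>2 i) (bitop \<tau>1 \<tau>2 j)"
    and "P_space (bitop \<tau>1 \<tau>2 j)"
    and "ij_weakly_Lindelof (bitop \<tau>1 \<tau>2 i) (bitop \<tau>1 \<tau>2 j)"
  shows "Lindelof_space (bitop \<tau>1 \<tau>2 i)"
proof (rule key)
  show "topspace (bitop \<tau>1 \<tau>2 i) = topspace (bitop \<tau>1 \<tau>2 j)"
    using assms(1) unfolding bitop_def by simp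
  show "ij1_nearly_paralindelof (bitop \<tau>1 \<tau>2 i) (bitop \<tau>1 \<tau>2 j)" by (rule assms(5))
  show "ij_regular (bitop \<tau>1 \<tau>2 i) (bitop \<tau>1 \<tau>2 j)" by (rule assms(6))
  show "P_space (bitop \<tau>1 \<tau>2 j)" by (rule assms(7))
  show "ij_weakly_Lindelof (bitop \<tau>1 \<tau>2 i) (bitop \<tau>1 \<tau>2 j)" by (rule assms(8))
qed

end
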